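(* Let $N\ge2$, $p\ge1$, and suppose $f_n\rightarrowtail f$ in $L^p(\mathbb T^N)$. For $1\le j\le N-1$ and $g\in L^1(\mathbb T^N)$ define $\hat g\in L^1(\mathbb T^{N-j})$ by $\hat g(t_{j+1},\dots,t_N)=\int_{\mathbb T^j}g(\cdot,t_{j+1},\dots,t_N)\,d\mu_j$. Then, for each $j=1,\dots,N-1$, $\hat f_n\rightarrowtail\hat f$ in $L^p(\mathbb T^{N-j})$.
   Context: $\mathbb T$ is the unit circle and $\mu_j$ the normalized Lebesgue measure on $\mathbb T^j$. For $M\ge1$, a sequence $f_n\in L^2(\mathbb T^M)$ converges to $f\in L^p(\mathbb T^M)$ ($p\ge1$) "restricted to hyperplanes", written $f_n\rightarrowtail f$ in $L^p(\mathbb T^M)$, if $f_n\to f$ in $L^p(\mathbb T^M)$ and, for each $l=2,\dots,M$ and a.e. $(t_l,\dots,t_M)\in\mathbb T^{M-l+1}$, $f_n(\cdot,t_l,\dots,t_M)\to f(\cdot,t_l,\dots,t_M)$ in $L^p(\mathbb T^{l-1})$ as functions of the first $l-1$ variables. *)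

theory Defs
  imports "HOL-Analysis.Analysis"
begin

text \<open>The unit circle T is modelled as [0,1) with Lebesgue measure (total mass 1,
  i.e. normalized). A point of T^M is a function nat => real whose coordinates
  0,...,M-1 correspond to t_1,...,t_M.\<close>

definition Tcirc :: "real measure" where
  "Tcirc = restrict_space lborel {0..<1}"

definition TM :: "nat \<Rightarrow> (nat \<Rightarrow> real) measure" where
  "TM M = PiM {..<M} (\<lambda>_. Tcirc)"

definition glue :: "nat \<Rightarrow> nat \<Rightarrow> (nat \<Rightarrow> real) \<Rightarrow> (nat \<Rightarrow> real) \<Rightarrow> (nat \<Rightarrow> real)" where
  "glue k M x y = (\<lambda>i. if i < k then x i else if i < M then y (i - k) else undefined)"

definition memLp :: "'a measure \<Rightarrow> real \<Rightarrow> ('a \<Rightarrow> complex) \<Rightarrow> bool" where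
  "memLp Mu p g \<longleftrightarrow> g \<in> borel_measurable Mu \<and>
     (\<integral>\<^sup>+ x. ennreal (cmod (g x) powr p) \<partial>Mu) < \<infinity>"

definition Lp_tendsto :: "'a measure \<Rightarrow> real \<Rightarrow> (nat \<Rightarrow> 'a \<Rightarrow> complex) \<Rightarrow> ('a \<Rightarrow> complex) \<Rightarrow> bool" where
  "Lp_tendsto Mu p fs f \<longleftrightarrow> (\<forall>n. fs n \<in> borel_measurable Mu) \<and> f \<in> borel_measurable Mu \<and>
     ((\<lambda>n. \<integral>\<^sup>+ x. ennreal (cmod (fs n x - f x) powr p) \<partial>Mu) \<longlonglongrightarrow> 0)"

text \<open>Convergence restricted to hyperplanes: f_n in L^2(T^M), f in L^p(T^M).\<close>
definition rconv :: "nat \<Rightarrow> real \<Rightarrow> (nat \<Rightarrow> (nat \<Rightarrow> real) \<Rightarrow> complex) \<Rightarrow> ((nat \<Rightarrow> real) \<Rightarrow> complex) \<Rightarrow> bool" where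
  "rconv M p fs f \<longleftrightarrow>
     (\<forall>n. memLp (TM M) 2 (fs n)) \<and> memLp (TM M) p f \<and> Lp_tendsto (TM M) p fs f \<and>
     (\<forall>l\<in>{2..M}. AE y in TM (M - l + 1).
        Lp_tendsto (TM (l - 1)) p (\<lambda>n x. fs n (glue (l - 1) M x y)) (\<lambda>x. f (glue (l - 1) M x y)))"

definition hat :: "nat \<Rightarrow> nat \<Rightarrow> ((nat \<Rightarrow> real) \<Rightarrow> complex) \<Rightarrow> (nat \<Rightarrow> real) \<Rightarrow> complex" where
  "hat j N g = (\<lambda>y. LINT x|TM j. g (glue j N x y))"

end

theory Submission
  imports Defs "HOL-Probability.Probability"
begin


lemma prob_Tcirc: "prob_space Tcirc"
  unfolding Tcirc_def
  by (rule prob_spaceI) (simp add: space_restrict_space emeasure_restrict_space)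

lemma prob_TM: "prob_space (TM M)"
  unfolding TM_def by (rule prob_space_PiM) (rule prob_Tcirc)

interpretation Tc: prob_space Tcirc by (rule prob_Tcirc)
interpretation TMp: prob_space "TM M" for M by (rule prob_TM)

lemma PTsf: "product_sigma_finite (\<lambda>_. Tcirc)"
  by (simp add: product_sigma_finite_def Tc.sigma_finite_measure_axioms)

lemma pair_TM: "pair_sigma_finite (TM m) (TM k)"
  by (simp add: pair_sigma_finite_def TMp.sigma_finite_measure_axioms)

lemma glue_meas:
  "(\<lambda>w. glue k (k+m) (snd w) (fst w)) \<in> measurable (TM m \<Otimes>\<^sub>M TM k) (TM (k+m))"
  unfolding TM_def
proof (rule measurable_PiM_single')
  fix i assume i: "i \<in> {..<k+m}"
  show "(\<lambda>w. glue k (k + m) (snd w) (fst w) i) \<in> Pi\<^sub>M {..<m} (\<lambda>_. Tcirc) \<Otimes>\<^sub>M Pi\<^sub>M {..<k} (\<lambda>_. Tcirc) \<rightarrow>\<^sub>M Tcirc"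
  proof (cases "i < k")
    case True
    then show ?thesis unfolding glue_def by simp
  next
    case False
    then have "i - k < m" using i by simp
    with False i show ?thesis unfolding glue_def by simp
  qed
next
  show "(\<lambda>w i. glue k (k + m) (snd w) (fst w) i) \<in> space (Pi\<^sub>M {..<m} (\<lambda>_. Tcirc) \<Otimes>\<^sub>M Pi\<^sub>M {..<k} (\<lambda>_. Tcirc)) \<rightarrow> (\<Pi>\<^sub>E i\<in>{..<k + m}. space Tcirc)"
    by (auto simp: space_pair_measure glue_def space_PiM PiE_iff extensional_def)
qed

lemma prod_split_nat: "(\<Prod>i<k+m. g i) = (\<Prod>i<k. g i) * (\<Prod>i<m. g (i+k::nat))" for g :: "nat \<Rightarrow> ennreal"
  by (induction m) (auto simp: mult.assoc add.commute)

lemma glue_preimage: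
  assumes "y \<in> space (TM m)" "z \<in> space (TM k)"
  shows "glue k (k+m) z y \<in> Pi\<^sub>E {..<k+m} A \<longleftrightarrow> y \<in> Pi\<^sub>E {..<m} (\<lambda>i. A (i+k)) \<and> z \<in> Pi\<^sub>E {..<k} A"
proof -
  have ey: "y \<in> extensional {..<m}" and ez: "z \<in> extensional {..<k}"
    using assms by (auto simp: TM_def space_PiM PiE_iff)
  show ?thesis
  proof
    assume h: "glue k (k+m) z y \<in> Pi\<^sub>E {..<k+m} A"
    have 1: "y i \<in> A (i+k)" if "i < m" for i
    proof -
      have "glue k (k+m) z y (i+k) \<in> A (i+k)" using h that by (auto simp: PiE_iff)
      then show ?thesis using that by (simp add: glue_def)
    qed
    have 2: "z i \<in> A i" if "i < k" for i
    proof -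
      have "glue k (k+m) z y i \<in> A i" using h that by (auto simp: PiE_iff)
      then show ?thesis using that by (simp add: glue_def)
    qed
    show "y \<in> Pi\<^sub>E {..<m} (\<lambda>i. A (i+k)) \<and> z \<in> Pi\<^sub>E {..<k} A"
      using 1 2 ey ez by (auto simp: PiE_iff)
  next
    assume h: "y \<in> Pi\<^sub>E {..<m} (\<lambda>i. A (i+k)) \<and> z \<in> Pi\<^sub>E {..<k} A"
    have "glue k (k+m) z y i \<in> A i" if "i < k+m" for i
    proof (cases "i < k")
      case True then show ?thesis using h by (auto simp: glue_def PiE_iff)
    next
      case False
      then have "i - k < m" "i - k + k = i" using that by auto
      then show ?thesis using h False that by (auto simp: glue_def PiE_iff dest!: bspec[of _ _ "i-k"])
    qed
    then show "glue k (k+m) z y \<in> Pi\<^sub>E {..<k+m} A"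
      by (auto simp: PiE_iff glue_def extensional_def)
  qed
qed

lemma glue_distr:
  "distr (TM m \<Otimes>\<^sub>M TM k) (TM (k+m)) (\<lambda>w. glue k (k+m) (snd w) (fst w)) = TM (k+m)"
proof -
  interpret PS: product_sigma_finite "\<lambda>_. Tcirc" by (rule PTsf)
  interpret P2: pair_sigma_finite "TM m" "TM k" by (rule pair_TM)
  show ?thesis
    unfolding TM_def[of "k+m"]
  proof (rule PS.PiM_eqI)
    show "sets (distr (TM m \<Otimes>\<^sub>M TM k) (Pi\<^sub>M {..<k + m} (\<lambda>_. Tcirc)) (\<lambda>w. glue k (k + m) (snd w) (fst w))) = sets (Pi\<^sub>M {..<k + m} (\<lambda>_. Tcirc))"
      by simp
  next
    fix A assume A: "\<And>i. i \<in> {..<k + m} \<Longrightarrow> A i \<in> sets Tcirc"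
    have Am: "Pi\<^sub>E {..<k + m} A \<in> sets (Pi\<^sub>M {..<k + m} (\<lambda>_. Tcirc))"
      using A by (intro sets_PiM_I_finite) auto
    have pre: "(\<lambda>w. glue k (k + m) (snd w) (fst w)) -` Pi\<^sub>E {..<k + m} A \<inter> space (TM m \<Otimes>\<^sub>M TM k)
        = Pi\<^sub>E {..<m} (\<lambda>i. A (i+k)) \<times> Pi\<^sub>E {..<k} A"
    proof -
      have sA: "Pi\<^sub>E {..<m} (\<lambda>i. A (i+k)) \<subseteq> space (TM m)" "Pi\<^sub>E {..<k} A \<subseteq> space (TM k)"
        using A[THEN sets.sets_into_space] unfolding TM_def space_PiM
        by (auto intro!: PiE_mono) (metis add.commute add_less_cancel_left subsetD trans_less_add2 lessThan_iff)+
      show ?thesis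
      proof (intro set_eqI iffI)
        fix w assume "w \<in> (\<lambda>w. glue k (k + m) (snd w) (fst w)) -` Pi\<^sub>E {..<k + m} A \<inter> space (TM m \<Otimes>\<^sub>M TM k)"
        then have s: "fst w \<in> space (TM m)" "snd w \<in> space (TM k)"
          and g: "glue k (k + m) (snd w) (fst w) \<in> Pi\<^sub>E {..<k + m} A"
          by (auto simp: space_pair_measure mem_Times_iff)
        show "w \<in> Pi\<^sub>E {..<m} (\<lambda>i. A (i+k)) \<times> Pi\<^sub>E {..<k} A"
          using glue_preimage[OF s, of A] g by (simp add: mem_Times_iff)
      next
        fix w assume w: "w \<in> Pi\<^sub>E {..<m} (\<lambda>i. A (i+k)) \<times> Pi\<^sub>E {..<k} A"
        have f: "fst w \<in> Pi\<^sub>E {..<m} (\<lambda>i. A (i+k))" "snd w \<in> Pi\<^sub>E {..<k} A" using w by (simp_all add: mem_Times_iff)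
        have s: "fst w \<in> space (TM m)" "snd w \<in> space (TM k)"
          by (rule subsetD[OF sA(1) f(1)], rule subsetD[OF sA(2) f(2)])
        have "glue k (k + m) (snd w) (fst w) \<in> Pi\<^sub>E {..<k + m} A"
          using glue_preimage[OF s, of A] f by simp
        moreover have "w \<in> space (TM m \<Otimes>\<^sub>M TM k)" using s by (simp add: space_pair_measure mem_Times_iff)
        ultimately show "w \<in> (\<lambda>w. glue k (k + m) (snd w) (fst w)) -` Pi\<^sub>E {..<k + m} A \<inter> space (TM m \<Otimes>\<^sub>M TM k)"
          by simp
      qed
    qed
    have "emeasure (distr (TM m \<Otimes>\<^sub>M TM k) (Pi\<^sub>M {..<k + m} (\<lambda>_. Tcirc)) (\<lambda>w. glue k (k + m) (snd w) (fst w))) (Pi\<^sub>E {..<k + m} A)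
        = emeasure (TM m \<Otimes>\<^sub>M TM k) (Pi\<^sub>E {..<m} (\<lambda>i. A (i+k)) \<times> Pi\<^sub>E {..<k} A)"
      using glue_meas[of k m] Am pre by (subst emeasure_distr) (auto simp: TM_def)
    also have "\<dots> = emeasure (TM m) (Pi\<^sub>E {..<m} (\<lambda>i. A (i+k))) * emeasure (TM k) (Pi\<^sub>E {..<k} A)"
      using A by (intro TMp.emeasure_pair_measure_Times) (auto simp: TM_def intro!: sets_PiM_I_finite)
    also have "\<dots> = (\<Prod>i<m. emeasure Tcirc (A (i+k))) * (\<Prod>i<k. emeasure Tcirc (A i))"
      using A unfolding TM_def by (subst PS.emeasure_PiM, simp, simp)+ simp
    also have "\<dots> = (\<Prod>i\<in>{..<k+m}. emeasure Tcirc (A i))"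
      by (simp add: prod_split_nat mult.commute)
    finally show "emeasure (distr (TM m \<Otimes>\<^sub>M TM k) (Pi\<^sub>M {..<k + m} (\<lambda>_. Tcirc)) (\<lambda>w. glue k (k + m) (snd w) (fst w))) (Pi\<^sub>E {..<k + m} A) = (\<Prod>i\<in>{..<k+m}. emeasure Tcirc (A i))" .
  qed simp
qed




lemma tangent_powr:
  fixes a t p :: real
  assumes a: "a > 0" and t: "t \<ge> 0" and p: "p \<ge> 1"
  shows "a powr p + p * a powr (p - 1) * (t - a) \<le> t powr p"
proof (cases "t = 0")
  case True
  have "p * a powr (p - 1) * a = p * a powr p"
    using a by (simp add: powr_diff field_simps)
  then show ?thesis using True a p
    by (simp add: algebra_simps)
next
  case False
  then have t': "t > 0" using t by simp
  have "p * a powr (p - 1) * (t - a) \<le> t powr p - a powr p"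
  proof (rule convex_on_imp_above_tangent[where A="{0<..}"])
    show "convex_on {0<..} (\<lambda>x. x powr p)" using powr_convex[OF p] .
    show "connected ({0<..} :: real set)" by simp
    show "a \<in> interior {0<..}" using a by (simp add: interior_open)
    show "t \<in> {0<..}" using t' by simp
    show "((\<lambda>x. x powr p) has_field_derivative p * a powr (p - 1)) (at a within {0<..})"
      using a by (auto intro!: derivative_eq_intros)
  qed
  then show ?thesis by simp
qed

lemma (in prob_space) jensen_powr:
  fixes g :: "'a \<Rightarrow> real" and p :: real
  assumes g: "integrable M g" "\<And>x. x \<in> space M \<Longrightarrow> g x \<ge> 0"
    and gp: "integrable M (\<lambda>x. g x powr p)" and p: "p \<ge> 1"
  shows "(\<integral>x. g x \<partial>M) powr p \<le> (\<integral>x. g x powr p \<partial>M)"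
proof -
  define a where "a = (\<integral>x. g x \<partial>M)"
  have a0: "a \<ge> 0" unfolding a_def using g by (auto intro!: integral_nonneg_AE)
  show ?thesis
  proof (cases "a = 0")
    case True
    then show ?thesis unfolding a_def[symmetric] by (auto intro!: integral_nonneg_AE)
  next
    case False
    then have a: "a > 0" using a0 by simp
    define c where "c = p * a powr (p - 1)"
    have "(\<integral>x. a powr p + c * (g x - a) \<partial>M) \<le> (\<integral>x. g x powr p \<partial>M)"
      using g gp tangent_powr[OF a _ p] unfolding c_def
      by (intro integral_mono) auto
    moreover have "(\<integral>x. a powr p + c * (g x - a) \<partial>M) = a powr p"
      using g(1) by (simp add: integral_add integral_diff prob_space a_def)
    ultimately show ?thesis unfolding a_def by simp
  qed
qed



lemma (in prob_space) Lp_bound: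
  fixes h :: "'a \<Rightarrow> complex" and p :: real
  assumes hm: "h \<in> borel_measurable M" and p: "p \<ge> 1"
    and fin: "(\<integral>\<^sup>+x. ennreal (cmod (h x) powr p) \<partial>M) < \<infinity>"
  shows "integrable M h" "ennreal (cmod (\<integral>x. h x \<partial>M) powr p) \<le> (\<integral>\<^sup>+x. ennreal (cmod (h x) powr p) \<partial>M)"
proof -
  have gp: "integrable M (\<lambda>x. cmod (h x) powr p)"
    using fin hm by (intro integrableI_bounded) auto
  have pt: "ennreal (cmod (h x)) \<le> 1 + ennreal (cmod (h x) powr p)" for x
  proof (cases "cmod (h x) \<le> 1")
    case True then show ?thesis
      by (metis add_increasing2 ennreal_le_1 zero_le)
  next
    case False
    then have "cmod (h x) powr 1 \<le> cmod (h x) powr p" using p by (intro powr_mono) auto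
    then show ?thesis using False
      by (metis add.commute add_increasing2 ennreal_leI powr_one_gt_zero_iff norm_ge_zero zero_le)
  qed
  have "(\<integral>\<^sup>+x. ennreal (norm (h x)) \<partial>M) \<le> (\<integral>\<^sup>+x. 1 + ennreal (cmod (h x) powr p) \<partial>M)"
    by (intro nn_integral_mono) (simp add: pt)
  also have "\<dots> = 1 + (\<integral>\<^sup>+x. ennreal (cmod (h x) powr p) \<partial>M)"
    using hm by (subst nn_integral_add) (auto simp: emeasure_space_1)
  also have "\<dots> < \<infinity>" using fin by (simp add: ennreal_add_eq_top less_top)
  finally show hi: "integrable M h" using hm by (intro integrableI_bounded) auto
  have "cmod (\<integral>x. h x \<partial>M) powr p \<le> (\<integral>x. cmod (h x) \<partial>M) powr p"
    using p by (intro powr_mono2 integral_norm_bound) auto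
  also have "\<dots> \<le> (\<integral>x. cmod (h x) powr p \<partial>M)"
    using hi gp p by (intro jensen_powr) auto
  finally have "ennreal (cmod (\<integral>x. h x \<partial>M) powr p) \<le> ennreal (\<integral>x. cmod (h x) powr p \<partial>M)"
    by (rule ennreal_leI)
  also have "\<dots> = (\<integral>\<^sup>+x. ennreal (cmod (h x) powr p) \<partial>M)"
    using gp by (subst nn_integral_eq_integral) auto
  finally show "ennreal (cmod (\<integral>x. h x \<partial>M) powr p) \<le> (\<integral>\<^sup>+x. ennreal (cmod (h x) powr p) \<partial>M)" .
qed



lemma glue_meas_slice:
  assumes "y \<in> space (TM m)"
  shows "(\<lambda>z. glue k (k+m) z y) \<in> measurable (TM k) (TM (k+m))"
  using measurable_Pair2[OF glue_meas assms] by simp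



lemma F1:
  assumes h: "h \<in> borel_measurable (TM (k+m))"
  shows "(\<integral>\<^sup>+x. h x \<partial>TM (k+m)) = (\<integral>\<^sup>+y. (\<integral>\<^sup>+z. h (glue k (k+m) z y) \<partial>TM k) \<partial>TM m)"
proof -
  have "(\<integral>\<^sup>+y. (\<integral>\<^sup>+z. h (glue k (k+m) z y) \<partial>TM k) \<partial>TM m)
     = (\<integral>\<^sup>+w. h (glue k (k+m) (snd w) (fst w)) \<partial>(TM m \<Otimes>\<^sub>M TM k))"
    using TMp.nn_integral_fst[of "\<lambda>w. h (glue k (k+m) (snd w) (fst w))" "TM m"]
      measurable_comp[OF glue_meas h] by (simp add: comp_def)
  also have "\<dots> = (\<integral>\<^sup>+x. h x \<partial>distr (TM m \<Otimes>\<^sub>M TM k) (TM (k+m)) (\<lambda>w. glue k (k+m) (snd w) (fst w)))"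
    using h glue_meas by (subst nn_integral_distr) auto
  finally show ?thesis by (simp add: glue_distr)
qed



lemma F2:
  fixes h :: "_ \<Rightarrow> complex"
  assumes h: "integrable (TM (k+m)) h"
  shows "AE y in TM m. integrable (TM k) (\<lambda>z. h (glue k (k+m) z y))"
proof -
  interpret P2: pair_sigma_finite "TM m" "TM k" by (rule pair_TM)
  have "integrable (distr (TM m \<Otimes>\<^sub>M TM k) (TM (k+m)) (\<lambda>w. glue k (k+m) (snd w) (fst w))) h"
    using h by (simp add: glue_distr)
  then have "integrable (TM m \<Otimes>\<^sub>M TM k) (\<lambda>w. h (glue k (k+m) (snd w) (fst w)))"
    using glue_meas h by (subst (asm) integrable_distr_eq) auto
  from P2.AE_integrable_fst'[OF this] show ?thesis by simp
qed



lemma F3: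
  fixes h :: "_ \<Rightarrow> complex"
  assumes h: "h \<in> borel_measurable (TM (k+m))"
  shows "hat k (k+m) h \<in> borel_measurable (TM m)"
proof -
  have "(\<lambda>(y,z). h (glue k (k+m) z y)) \<in> borel_measurable (TM m \<Otimes>\<^sub>M TM k)"
    using measurable_comp[OF glue_meas h] by (simp add: comp_def split_beta')
  from TMp.borel_measurable_lebesgue_integral[OF this] show ?thesis
    unfolding hat_def by simp
qed



lemma slice_fin:
  assumes h: "h \<in> borel_measurable (TM (k+m))"
    and fin: "(\<integral>\<^sup>+x. ennreal (cmod (h x) powr q) \<partial>TM (k+m)) < \<infinity>"
  shows "AE y in TM m. (\<integral>\<^sup>+z. ennreal (cmod (h (glue k (k+m) z y)) powr q) \<partial>TM k) < \<infinity>"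
proof -
  have hm: "(\<lambda>x. ennreal (cmod (h x) powr q)) \<in> borel_measurable (TM (k+m))" using h by simp
  have "(\<lambda>(y,z). ennreal (cmod (h (glue k (k+m) z y)) powr q)) \<in> borel_measurable (TM m \<Otimes>\<^sub>M TM k)"
    using measurable_comp[OF glue_meas hm] by (simp add: comp_def split_beta')
  from TMp.borel_measurable_nn_integral_fst[OF this]
  have mi: "(\<lambda>y. \<integral>\<^sup>+z. ennreal (cmod (h (glue k (k+m) z y)) powr q) \<partial>TM k) \<in> borel_measurable (TM m)"
    by simp
  have "(\<integral>\<^sup>+y. (\<integral>\<^sup>+z. ennreal (cmod (h (glue k (k+m) z y)) powr q) \<partial>TM k) \<partial>TM m) \<noteq> \<infinity>"
    using fin F1[OF hm] by simp
  from nn_integral_PInf_AE[OF mi this] show ?thesis by (simp add: less_top)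
qed



lemma slice_memLp:
  assumes "memLp (TM (k+m)) q h"
  shows "AE y in TM m. memLp (TM k) q (\<lambda>z. h (glue k (k+m) z y))"
proof -
  have h: "h \<in> borel_measurable (TM (k+m))" and fin: "(\<integral>\<^sup>+x. ennreal (cmod (h x) powr q) \<partial>TM (k+m)) < \<infinity>"
    using assms by (auto simp: memLp_def)
  from slice_fin[OF h fin] AE_space show ?thesis
  proof eventually_elim
    case (elim y)
    then show ?case using measurable_comp[OF glue_meas_slice[OF elim(2)] h]
      by (simp add: memLp_def comp_def)
  qed
qed



lemma hat_bound:
  fixes h :: "_ \<Rightarrow> complex"
  assumes h: "h \<in> borel_measurable (TM (k+m))" and p: "p \<ge> 1"
  shows "(\<integral>\<^sup>+y. ennreal (cmod (hat k (k+m) h y) powr p) \<partial>TM m) \<le> (\<integral>\<^sup>+x. ennreal (cmod (h x) powr p) \<partial>TM (k+m))"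
proof (cases "(\<integral>\<^sup>+x. ennreal (cmod (h x) powr p) \<partial>TM (k+m)) < \<infinity>")
  case False then show ?thesis by (simp add: not_less top_unique)
next
  case True
  have hm: "(\<lambda>x. ennreal (cmod (h x) powr p)) \<in> borel_measurable (TM (k+m))" using h by simp
  have "(\<integral>\<^sup>+y. ennreal (cmod (hat k (k+m) h y) powr p) \<partial>TM m)
      \<le> (\<integral>\<^sup>+y. (\<integral>\<^sup>+z. ennreal (cmod (h (glue k (k+m) z y)) powr p) \<partial>TM k) \<partial>TM m)"
  proof (rule nn_integral_mono_AE)
    from slice_fin[OF h True] AE_space
    show "AE y in TM m. ennreal (cmod (hat k (k+m) h y) powr p) \<le> (\<integral>\<^sup>+z. ennreal (cmod (h (glue k (k+m) z y)) powr p) \<partial>TM k)"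
    proof eventually_elim
      case (elim y)
      have "(\<lambda>z. h (glue k (k+m) z y)) \<in> borel_measurable (TM k)"
        using measurable_comp[OF glue_meas_slice[OF elim(2)] h] by (simp add: comp_def)
      from TMp.Lp_bound(2)[OF this p elim(1)] show ?case by (simp add: hat_def)
    qed
  qed
  also have "\<dots> = (\<integral>\<^sup>+x. ennreal (cmod (h x) powr p) \<partial>TM (k+m))"
    using F1[OF hm] by simp
  finally show ?thesis .
qed



lemma memLp_integrable:
  assumes "memLp (TM K) q h" "q \<ge> 1"
  shows "integrable (TM K) h"
proof -
  have "h \<in> borel_measurable (TM K)" "(\<integral>\<^sup>+x. ennreal (cmod (h x) powr q) \<partial>TM K) < \<infinity>"
    using assms(1) unfolding memLp_def by blast+
  from TMp.Lp_bound(1)[OF this(1) assms(2) this(2)] show ?thesis .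
qed



lemma memLp_hat:
  assumes "memLp (TM (k+m)) q h" "q \<ge> 1"
  shows "memLp (TM m) q (hat k (k+m) h)"
proof -
  have h: "h \<in> borel_measurable (TM (k+m))" and fin: "(\<integral>\<^sup>+x. ennreal (cmod (h x) powr q) \<partial>TM (k+m)) < \<infinity>"
    using assms(1) unfolding memLp_def by blast+
  show ?thesis unfolding memLp_def
    using F3[OF h] le_less_trans[OF hat_bound[OF h assms(2)] fin] by blast
qed



lemma Lp_tendsto_hat:
  assumes gi: "\<And>n. integrable (TM (k+m)) (gs n)" and g: "integrable (TM (k+m)) g"
    and lt: "Lp_tendsto (TM (k+m)) p gs g" and p: "p \<ge> 1"
  shows "Lp_tendsto (TM m) p (\<lambda>n. hat k (k+m) (gs n)) (hat k (k+m) g)"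
  unfolding Lp_tendsto_def
proof (intro conjI allI)
  show "hat k (k+m) (gs n) \<in> borel_measurable (TM m)" for n using F3 gi by auto
  show "hat k (k+m) g \<in> borel_measurable (TM m)" using F3 g by auto
  have lim: "(\<lambda>n. \<integral>\<^sup>+ x. ennreal (cmod (gs n x - g x) powr p) \<partial>TM (k+m)) \<longlonglongrightarrow> 0"
    using lt by (simp add: Lp_tendsto_def)
  have le: "(\<integral>\<^sup>+ y. ennreal (cmod (hat k (k+m) (gs n) y - hat k (k+m) g y) powr p) \<partial>TM m)
     \<le> (\<integral>\<^sup>+ x. ennreal (cmod (gs n x - g x) powr p) \<partial>TM (k+m))" for n
  proof -
    have "(\<integral>\<^sup>+ y. ennreal (cmod (hat k (k+m) (gs n) y - hat k (k+m) g y) powr p) \<partial>TM m)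
       = (\<integral>\<^sup>+ y. ennreal (cmod (hat k (k+m) (\<lambda>x. gs n x - g x) y) powr p) \<partial>TM m)"
    proof (rule nn_integral_cong_AE)
      from F2[OF gi[of n]] F2[OF g]
      show "AE y in TM m. ennreal (cmod (hat k (k+m) (gs n) y - hat k (k+m) g y) powr p) =
          ennreal (cmod (hat k (k+m) (\<lambda>x. gs n x - g x) y) powr p)"
        by eventually_elim (simp add: hat_def)
    qed
    also have "\<dots> \<le> (\<integral>\<^sup>+ x. ennreal (cmod (gs n x - g x) powr p) \<partial>TM (k+m))"
      using gi g p by (intro hat_bound) auto
    finally show ?thesis .
  qed
  show "(\<lambda>n. \<integral>\<^sup>+ y. ennreal (cmod (hat k (k+m) (gs n) y - hat k (k+m) g y) powr p) \<partial>TM m) \<longlonglongrightarrow> 0"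
    by (rule tendsto_sandwich[OF _ _ tendsto_const lim]) (simp_all add: le)
qed



lemma glue_comp:
  "glue j (j+r+s) z (glue r (r+s) x y) = glue (j+r) (j+r+s) (glue j (j+r) z x) y"
  by (rule ext) (auto simp: glue_def)





lemma main_j:
  fixes fs :: "nat \<Rightarrow> (nat \<Rightarrow> real) \<Rightarrow> complex" and f :: "(nat \<Rightarrow> real) \<Rightarrow> complex"
  assumes p: "p \<ge> 1" and rc: "rconv (j+m) p fs f"
  shows "rconv m p (\<lambda>n. hat j (j+m) (fs n)) (hat j (j+m) f)"
proof -
  have A1: "\<And>n. memLp (TM (j+m)) 2 (fs n)" and A2: "memLp (TM (j+m)) p f"
    and A3: "Lp_tendsto (TM (j+m)) p fs f"
    and A4: "\<forall>l\<in>{2..j+m}. AE y in TM (j+m - l + 1).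
        Lp_tendsto (TM (l - 1)) p (\<lambda>n x. fs n (glue (l - 1) (j+m) x y)) (\<lambda>x. f (glue (l - 1) (j+m) x y))"
    using rc unfolding rconv_def by blast+
  have I1: "\<And>n. integrable (TM (j+m)) (fs n)" using A1 memLp_integrable by force
  have I2: "integrable (TM (j+m)) f" using A2 p memLp_integrable by blast
  show ?thesis
    unfolding rconv_def
  proof (intro conjI allI ballI)
    show "memLp (TM m) 2 (hat j (j+m) (fs n))" for n using memLp_hat[OF A1] by simp
    show "memLp (TM m) p (hat j (j+m) f)" using memLp_hat[OF A2 p] .
    show "Lp_tendsto (TM m) p (\<lambda>n. hat j (j+m) (fs n)) (hat j (j+m) f)"
      using Lp_tendsto_hat[OF I1 I2 A3 p] .
  next
    fix l assume l: "l \<in> {2..m}"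
    define r where "r = l - 1"
    define s where "s = m - l + 1"
    have msr: "m = r + s" "l - 1 = r" "m - l + 1 = s" using l by (auto simp: r_def s_def)
    have l': "j + l \<in> {2..j+m}" and e1: "j + l - 1 = j + r" and e2: "j + m - (j + l) + 1 = s"
      and e3: "j + m = j + r + s"
      using l by (auto simp: r_def s_def)
    have H: "AE y in TM s. Lp_tendsto (TM (j+r)) p (\<lambda>n x. fs n (glue (j+r) (j+r+s) x y)) (\<lambda>x. f (glue (j+r) (j+r+s) x y))"
    proof -
      have e2': "j + r + s - (j + l) + 1 = s" using e2 e3 by simp
      show ?thesis using bspec[OF A4 l'] unfolding e1 e3 e2' .
    qed
    have S1: "AE y in TM s. \<forall>n. memLp (TM (j+r)) 2 (\<lambda>z. fs n (glue (j+r) (j+r+s) z y))"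
      unfolding AE_all_countable
    proof
      fix n
      have "memLp (TM (j+r+s)) 2 (fs n)" using A1[of n] unfolding e3 .
      from slice_memLp[OF this] show "AE y in TM s. memLp (TM (j+r)) 2 (\<lambda>z. fs n (glue (j+r) (j+r+s) z y))" .
    qed
    have S2: "AE y in TM s. memLp (TM (j+r)) p (\<lambda>z. f (glue (j+r) (j+r+s) z y))"
    proof -
      have "memLp (TM (j+r+s)) p f" using A2 unfolding e3 .
      from slice_memLp[OF this] show ?thesis .
    qed
    have G: "AE y in TM s. Lp_tendsto (TM r) p (\<lambda>n x. hat j (j+r+s) (fs n) (glue r (r+s) x y))
            (\<lambda>x. hat j (j+r+s) f (glue r (r+s) x y))"
    using H S1 S2
    proof eventually_elim
      case (elim y)
      have i1: "integrable (TM (j+r)) (\<lambda>z. fs n (glue (j+r) (j+r+s) z y))" for n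
        using elim(2) memLp_integrable by force
      have i2: "integrable (TM (j+r)) (\<lambda>z. f (glue (j+r) (j+r+s) z y))"
        using elim(3) p memLp_integrable by blast
      have L: "Lp_tendsto (TM r) p (\<lambda>n. hat j (j+r) (\<lambda>z. fs n (glue (j+r) (j+r+s) z y)))
          (hat j (j+r) (\<lambda>z. f (glue (j+r) (j+r+s) z y)))"
        using Lp_tendsto_hat[OF i1 i2 elim(1) p] .
      have eq: "hat j (j+r+s) g (glue r (r+s) x y) = hat j (j+r) (\<lambda>z. g (glue (j+r) (j+r+s) z y)) x"
        for g :: "(nat \<Rightarrow> real) \<Rightarrow> complex" and x
        unfolding hat_def glue_comp[of j r s] by (simp add: add.assoc)
      show ?case using L by (simp only: eq)
    qed
    show "AE y in TM (m - l + 1). Lp_tendsto (TM (l - 1)) p (\<lambda>n x. hat j (j+m) (fs n) (glue (l - 1) m x y))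
            (\<lambda>x. hat j (j+m) f (glue (l - 1) m x y))"
      unfolding msr(3) unfolding msr(2) unfolding e3 unfolding msr(1) using G .
  qed
qed

theorem lemma7p2:
  fixes N :: nat and p :: real
    and fs :: "nat \<Rightarrow> (nat \<Rightarrow> real) \<Rightarrow> complex" and f :: "(nat \<Rightarrow> real) \<Rightarrow> complex"
  assumes "N \<ge> 2" and "p \<ge> 1" and "rconv N p fs f"
  shows "\<forall>j\<in>{1..N-1}. rconv (N - j) p (\<lambda>n. hat j N (fs n)) (hat j N f)"
proof
  fix j assume j: "j \<in> {1..N-1}"
  define m where "m = N - j"
  have Nm: "N = j + m" and "N - j = m" using j by (auto simp: m_def)
  have "rconv (j+m) p fs f" using assms(3) Nm by simp
  from main_j[OF assms(2) this] show "rconv (N - j) p (\<lambda>n. hat j N (fs n)) (hat j N f)"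
    using Nm by simp
qed


end
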